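(* Consider (1+1) GP-single applied to MO-ORDER, and (1+1) GP-single applied to MO-MAJORITY, each started with the empty tree as initial solution. In both cases the expected optimization time is $\Omega(n\log n)$.
   Context: Fix an integer $n\ge 1$ and real weights $w_1\ge w_2\ge\dots\ge w_n>0$. The terminal set is $T=\{x_1,\bar x_1,\dots,x_n,\bar x_n\}$ ($\bar x_i$ is the complement of $x_i$; $x_i$ is called positive). A syntax tree is either the empty tree or a rooted ordered binary tree whose inner nodes are all labelled by the binary function $J$ (join, exactly two ordered children) and whose leaves are labelled by elements of $T$. The complexity $C(X)$ is the number of nodes of $X$ (0 for the empty tree). The leaf list $l$ of $X$ is the sequence of leaf labels in an inorder traversal. WORDER: build a list $S$ by scanning $l$ from front to rear and appending a literal only if neither it nor its complement is already in $S$; WORDER$(X)=\sum_{i:\,x_i\in S} w_i$. WMAJORITY: WMAJORITY$(X)=\sum w_i$ over all $i$ such that $x_i$ occurs in $l$ at least once and at least as often as $\bar x_i$. ORDER and MAJORITY are WORDER and WMAJORITY with all $w_i=1$. For $F$ one of these, MO-$F(X)=(F(X),C(X))$ (MO-ORDER, MO-MAJORITY, MO-WORDER, MO-WMAJORITY), where $F$ is to be maximized and $C$ minimized. Mutation (HVL-Prime applied $k$ times): each application chooses uniformly at random one of three operations. Substitute: replace a uniformly random leaf by a uniformly random $u\in T$. Insert: choose a uniformly random node $v$ and uniformly random $u\in T$, replace $v$ by a $J$-node with children $u$ and $v$ in uniformly random order (inserting into the empty tree yields the single leaf $u$). Delete: choose a uniformly random leaf $v$ with parent $p$ and sibling $u$,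 replace $p$ by $u$ (deleting $p$ and $v$; deleting the only leaf of a one-leaf tree yields the empty tree). Single-operation mutation uses $k=1$. (1+1) GP-single on MO-$F$: start with an initial tree $X$; in each iteration let $Y$ be $X$ mutated with $k=1$, and set $X:=Y$ iff $F(Y)>F(X)$, or $F(Y)=F(X)$ and $C(Y)\le C(X)$. Expected optimization time: expected number of iterations (fitness evaluations) until the current solution is for the first time optimal, i.e. has maximum possible $F$-value and, among such trees, minimum complexity. *)

theory Defs
  imports "HOL-Probability.Probability"
begin

text \<open>Literals: Pos i is x_i, Neg i is its complement. Variables are indexed 1..n.\<close>
datatype lit = Pos nat | Neg nat

fun compl :: "lit \<Rightarrow> lit" where
  "compl (Pos i) = Neg i"
| "compl (Neg i) = Pos i"

definition lits :: "nat \<Rightarrow> lit set" where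
  "lits n = Pos ` {1..n} \<union> Neg ` {1..n}"

text \<open>Nonempty syntax trees: leaves labelled by literals, inner nodes are J with two
  ordered children. The empty tree is represented by None (type tree option).\<close>
datatype tree = Lf lit | J tree tree

fun nleaves :: "tree \<Rightarrow> nat" where
  "nleaves (Lf a) = 1"
| "nleaves (J l r) = nleaves l + nleaves r"

fun nnodes :: "tree \<Rightarrow> nat" where
  "nnodes (Lf a) = 1"
| "nnodes (J l r) = 1 + nnodes l + nnodes r"

definition cplx :: "tree option \<Rightarrow> nat" where
  "cplx X = (case X of None \<Rightarrow> 0 | Some t \<Rightarrow> nnodes t)"

fun leaves :: "tree \<Rightarrow> lit list" where
  "leaves (Lf a) = [a]"
| "leaves (J l r) = leaves l @ leaves r"

definition leaflist :: "tree option \<Rightarrow> lit list" where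
  "leaflist X = (case X of None \<Rightarrow> [] | Some t \<Rightarrow> leaves t)"

text \<open>The list S of WORDER: scan from front to rear, append a literal only if
  neither it nor its complement is already in S.\<close>
fun order_scan :: "lit list \<Rightarrow> lit list \<Rightarrow> lit list" where
  "order_scan S [] = S"
| "order_scan S (a # l) =
     order_scan (if a \<in> set S \<or> compl a \<in> set S then S else S @ [a]) l"

definition worder :: "(nat \<Rightarrow> real) \<Rightarrow> nat \<Rightarrow> tree option \<Rightarrow> real" where
  "worder w n X = (\<Sum>i\<in>{1..n}. if Pos i \<in> set (order_scan [] (leaflist X)) then w i else 0)"

definition wmajority :: "(nat \<Rightarrow> real) \<Rightarrow> nat \<Rightarrow> tree option \<Rightarrow> real" where
  "wmajority w n X = (\<Sum>i\<in>{1..n}.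
     if count_list (leaflist X) (Pos i) \<ge> 1 \<and>
        count_list (leaflist X) (Pos i) \<ge> count_list (leaflist X) (Neg i)
     then w i else 0)"

definition ORDER :: "nat \<Rightarrow> tree option \<Rightarrow> real" where
  "ORDER n = worder (\<lambda>_. 1) n"

definition MAJORITY :: "nat \<Rightarrow> tree option \<Rightarrow> real" where
  "MAJORITY n = wmajority (\<lambda>_. 1) n"

text \<open>Replace the i-th leaf (inorder, 0-based) by u.\<close>
fun subst_leaf :: "nat \<Rightarrow> lit \<Rightarrow> tree \<Rightarrow> tree" where
  "subst_leaf i u (Lf a) = Lf u"
| "subst_leaf i u (J l r) =
     (if i < nleaves l then J (subst_leaf i u l) r
      else J l (subst_leaf (i - nleaves l) u r))"

text \<open>Insert at the i-th node (preorder, 0-based): the node v is replaced by a J-node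
  with children u and v; if b then u is the left child, otherwise the right child.\<close>
fun insert_at :: "nat \<Rightarrow> lit \<Rightarrow> bool \<Rightarrow> tree \<Rightarrow> tree" where
  "insert_at i u b (Lf a) = (if b then J (Lf u) (Lf a) else J (Lf a) (Lf u))"
| "insert_at i u b (J l r) =
     (if i = 0 then (if b then J (Lf u) (J l r) else J (J l r) (Lf u))
      else if i \<le> nnodes l then J (insert_at (i - 1) u b l) r
      else J l (insert_at (i - 1 - nnodes l) u b r))"

text \<open>Delete the i-th leaf (inorder, 0-based): its parent is replaced by its sibling;
  deleting the only leaf of a one-leaf tree yields the empty tree (None).\<close>
fun delete_leaf :: "nat \<Rightarrow> tree \<Rightarrow> tree option" where
  "delete_leaf i (Lf a) = None"
| "delete_leaf i (J l r) =
     (if i < nleaves l then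
        (case delete_leaf i l of None \<Rightarrow> Some r | Some l' \<Rightarrow> Some (J l' r))
      else
        (case delete_leaf (i - nleaves l) r of None \<Rightarrow> Some l | Some r' \<Rightarrow> Some (J l r')))"

text \<open>One application of HVL-Prime (k = 1). Substitute and delete on the empty tree
  (which has no leaf) leave it unchanged.\<close>
definition substitute :: "nat \<Rightarrow> tree option \<Rightarrow> tree option pmf" where
  "substitute n X = (case X of
      None \<Rightarrow> return_pmf None
    | Some t \<Rightarrow> do { i \<leftarrow> pmf_of_set {..<nleaves t}; u \<leftarrow> pmf_of_set (lits n);
                    return_pmf (Some (subst_leaf i u t)) })"

definition insertion :: "nat \<Rightarrow> tree option \<Rightarrow> tree option pmf" where
  "insertion n X = (case X of
      None \<Rightarrow> do { u \<leftarrow> pmf_of_set (lits n); return_pmf (Some (Lf u)) }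
    | Some t \<Rightarrow> do { i \<leftarrow> pmf_of_set {..<nnodes t}; u \<leftarrow> pmf_of_set (lits n);
                    b \<leftarrow> pmf_of_set (UNIV :: bool set);
                    return_pmf (Some (insert_at i u b t)) })"

definition deletion :: "tree option \<Rightarrow> tree option pmf" where
  "deletion X = (case X of
      None \<Rightarrow> return_pmf None
    | Some t \<Rightarrow> do { i \<leftarrow> pmf_of_set {..<nleaves t}; return_pmf (delete_leaf i t) })"

definition hvl_prime :: "nat \<Rightarrow> tree option \<Rightarrow> tree option pmf" where
  "hvl_prime n X = do {
     op \<leftarrow> pmf_of_set {0, 1, 2 :: nat};
     (if op = 0 then substitute n X else if op = 1 then insertion n X else deletion X) }"

definition gp_step :: "nat \<Rightarrow> (tree option \<Rightarrow> real) \<Rightarrow> tree option \<Rightarrow> tree option pmf" where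
  "gp_step n F X = map_pmf
     (\<lambda>Y. if F Y > F X \<or> (F Y = F X \<and> cplx Y \<le> cplx X) then Y else X) (hvl_prime n X)"

fun traj :: "('a \<Rightarrow> 'a pmf) \<Rightarrow> 'a \<Rightarrow> nat \<Rightarrow> 'a list pmf" where
  "traj K x0 0 = return_pmf [x0]"
| "traj K x0 (Suc t) = do { xs \<leftarrow> traj K x0 t; y \<leftarrow> K (last xs); return_pmf (xs @ [y]) }"

definition valid_tree :: "nat \<Rightarrow> tree option \<Rightarrow> bool" where
  "valid_tree n X \<longleftrightarrow> set (leaflist X) \<subseteq> lits n"

definition optimal :: "nat \<Rightarrow> (tree option \<Rightarrow> real) \<Rightarrow> tree option \<Rightarrow> bool" where
  "optimal n F X \<longleftrightarrow>
     (\<forall>Y. valid_tree n Y \<longrightarrow> F Y \<le> F X) \<and>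
     (\<forall>Y. valid_tree n Y \<longrightarrow> F Y = F X \<longrightarrow> cplx X \<le> cplx Y)"

text \<open>Expected optimization time: expectation of the (possibly infinite) first time T
  at which X_T is optimal, written as E[T] = sum over t of Pr[T > t], where
  T > t iff none of X_0, ..., X_t is optimal.\<close>
definition expected_opt_time :: "nat \<Rightarrow> (tree option \<Rightarrow> real) \<Rightarrow> tree option \<Rightarrow> ennreal" where
  "expected_opt_time n F X0 =
     (\<Sum>t. ennreal (measure_pmf.prob (traj (gp_step n F) X0 t)
                       {xs. \<forall>x\<in>set xs. \<not> optimal n F x}))"

end

theory Submission imports Defs "HOL-Analysis.Harmonic_Numbers" begin


lemma leaves_subst: "set (leaves (subst_leaf i u t)) \<subseteq> set (leaves t) \<union> {u}"
  by (induction i u t rule: subst_leaf.induct) auto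

lemma leaves_insert: "set (leaves (insert_at i u b t)) \<subseteq> set (leaves t) \<union> {u}"
  by (induction i u b t rule: insert_at.induct) auto

lemma leaves_delete: "delete_leaf i t = Some t' \<Longrightarrow> set (leaves t') \<subseteq> set (leaves t)"
  by (induction i t arbitrary: t' rule: delete_leaf.induct) (auto split: if_splits option.splits)

lemma leaflist_delete: "set (leaflist (delete_leaf i t)) \<subseteq> set (leaflist (Some t))"
  using leaves_delete[of i t] by (cases "delete_leaf i t") (auto simp: leaflist_def)

definition Pset :: "nat \<Rightarrow> tree option \<Rightarrow> nat set" where
  "Pset n X = {i\<in>{1..n}. Pos i \<in> set (leaflist X)}"
definition mm :: "nat \<Rightarrow> tree option \<Rightarrow> nat" where "mm n X = card (Pset n X)"
definition gfun :: "nat \<Rightarrow> nat \<Rightarrow> real" where "gfun n k = 2 * real n * harm (n - k)"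
definition gg :: "nat \<Rightarrow> tree option \<Rightarrow> real" where "gg n X = gfun n (mm n X)"
definition dd :: "nat \<Rightarrow> tree option \<Rightarrow> real" where
  "dd n X = (if mm n X < n then 2 * real n / real (n - mm n X) else 0)"
definition Miss :: "nat \<Rightarrow> tree option \<Rightarrow> lit set" where
  "Miss n X = Pos ` ({1..n} - Pset n X)"

lemma mm_le: "mm n X \<le> n"
proof -
  have "card (Pset n X) \<le> card {1..n}" by (rule card_mono) (auto simp: Pset_def)
  then show ?thesis by (simp add: mm_def)
qed

lemma gfun_anti: "k \<le> k' \<Longrightarrow> gfun n k' \<le> gfun n k"
  unfolding gfun_def by (intro mult_left_mono harm_mono) auto

lemma gfun_nonneg: "0 \<le> gfun n k"
  unfolding gfun_def by (simp add: harm_nonneg)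

lemma gg_nonneg: "0 \<le> gg n X" by (simp add: gg_def gfun_nonneg)

lemma gfun_step: "k < n \<Longrightarrow> gfun n k = gfun n (Suc k) + 2 * real n / real (n - k)"
proof -
  assume "k < n"
  then obtain j where j: "n - k = Suc j" "n - Suc k = j" by (metis Suc_diff_Suc)
  show ?thesis unfolding gfun_def j harm_Suc by (simp add: field_simps)
qed

lemma t1: "u \<in> Miss n X \<Longrightarrow> \<exists>j. u = Pos j \<and> j \<in> {1..n} \<and> j \<notin> Pset n X"
  unfolding Miss_def by auto
lemma t2: "set (leaflist y) \<subseteq> set (leaflist X) \<union> {u} \<Longrightarrow> u = Pos j \<Longrightarrow> Pset n y \<subseteq> insert j (Pset n X)"
proof
  fix i assume A: "set (leaflist y) \<subseteq> set (leaflist X) \<union> {u}" "u = Pos j" and i: "i \<in> Pset n y"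
  then have i1: "i \<in> {1..n}" and i2: "Pos i \<in> set (leaflist y)" by (simp_all add: Pset_def)
  then have "Pos i \<in> set (leaflist X) \<or> Pos i = u" using A(1) by blast
  then show "i \<in> insert j (Pset n X)" using i1 A(2) by (auto simp: Pset_def)
qed
lemma t3: "set (leaflist y) \<subseteq> set (leaflist X) \<union> {u} \<Longrightarrow> u \<notin> Miss n X \<Longrightarrow> Pset n y \<subseteq> Pset n X"
proof
  fix i assume A: "set (leaflist y) \<subseteq> set (leaflist X) \<union> {u}" "u \<notin> Miss n X" and i: "i \<in> Pset n y"
  then have i1: "i \<in> {1..n}" and i2: "Pos i \<in> set (leaflist y)" by (simp_all add: Pset_def)
  then have "Pos i \<in> set (leaflist X) \<or> Pos i = u" using A(1) by blast
  moreover have "Pos i = u \<Longrightarrow> i \<in> Pset n X"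
  proof (rule ccontr)
    assume "Pos i = u" "i \<notin> Pset n X"
    then have "u \<in> Miss n X" using i1 unfolding Miss_def by blast
    then show False using A(2) by blast
  qed
  ultimately show "i \<in> Pset n X" using i1 by (auto simp: Pset_def)
qed
lemma t4: "Pset n y \<subseteq> Pset n X \<Longrightarrow> mm n y \<le> mm n X"
  unfolding mm_def by (rule card_mono) (auto simp: Pset_def)
lemma t5: "j \<in> {1..n} \<Longrightarrow> j \<notin> Pset n X \<Longrightarrow> mm n X < n"
proof -
  assume j: "j \<in> {1..n}" "j \<notin> Pset n X"
  have sub: "Pset n X \<subseteq> {1..n}" unfolding Pset_def by blast
  have ne: "Pset n X \<noteq> {1..n}" using j by blast
  have "card (Pset n X) < card {1..n}"
    by (rule psubset_card_mono[OF finite_atLeastAtMost psubsetI[OF sub ne]])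
  then show ?thesis unfolding mm_def by simp
qed

lemma key_pointwise:
  assumes "set (leaflist y) \<subseteq> set (leaflist X) \<union> {u}"
  shows "gg n X \<le> min (gg n y) (gg n X) + dd n X * indicator (Miss n X) u"
proof (cases "u \<in> Miss n X")
  case True
  then obtain j where j: "u = Pos j" "j \<in> {1..n}" "j \<notin> Pset n X" using t1 by blast
  have sub: "Pset n y \<subseteq> insert j (Pset n X)" using t2[OF assms j(1)] .
  have fin: "finite (Pset n X)" by (simp add: Pset_def)
  have "card (Pset n y) \<le> card (insert j (Pset n X))" by (rule card_mono[OF finite_insert[THEN iffD2, OF fin] sub])
  also have "\<dots> \<le> Suc (card (Pset n X))" using fin by (simp add: card_insert_if)
  finally have m1: "mm n y \<le> Suc (mm n X)" unfolding mm_def .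
  have lt: "mm n X < n" using t5[OF j(2) j(3)] .
  have g1: "gfun n (Suc (mm n X)) \<le> gg n y" unfolding gg_def by (rule gfun_anti[OF m1])
  have eq1: "gg n X = gfun n (Suc (mm n X)) + dd n X"
    using gfun_step[OF lt] lt by (simp add: gg_def dd_def)
  have d0: "0 \<le> dd n X" by (simp add: dd_def)
  have "gfun n (Suc (mm n X)) \<le> min (gg n y) (gg n X)" using g1 eq1 d0 by (intro min.boundedI) linarith+
  moreover have "indicator (Miss n X) u = (1::real)" using True by simp
  ultimately show ?thesis using eq1 by simp
next
  case False
  have sub: "Pset n y \<subseteq> Pset n X" using t3[OF assms False] .
  have "mm n y \<le> mm n X" using t4[OF sub] .
  then have "gg n X \<le> gg n y" unfolding gg_def by (rule gfun_anti)
  then have "min (gg n y) (gg n X) = gg n X" by (rule min_absorb2)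
  moreover have "indicator (Miss n X) u = (0::real)" using False by simp
  ultimately show ?thesis by simp
qed


definition Good :: "nat \<Rightarrow> tree option \<Rightarrow> tree option pmf \<Rightarrow> bool" where
  "Good n X p \<longleftrightarrow> ennreal (gg n X) \<le> (\<integral>\<^sup>+y. ennreal (min (gg n y) (gg n X)) \<partial>p) + 1"

lemma nn_add_const_pmf: "(\<integral>\<^sup>+y. f y + ennreal c \<partial>measure_pmf p) = (\<integral>\<^sup>+y. f y \<partial>p) + ennreal c"
  by (subst nn_integral_add) (auto simp: measure_pmf.emeasure_space_1)

lemma Good_support:
  assumes "\<forall>y\<in>set_pmf p. set (leaflist y) \<subseteq> set (leaflist X)"
  shows "Good n X p"
proof -
  have "\<forall>y\<in>set_pmf p. min (gg n y) (gg n X) = gg n X"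
  proof
    fix y assume "y \<in> set_pmf p"
    then have "set (leaflist y) \<subseteq> set (leaflist X)" using assms by blast
    then have "Pset n y \<subseteq> Pset n X" unfolding Pset_def by blast
    then have "mm n y \<le> mm n X" by (rule t4)
    then have "gg n X \<le> gg n y" unfolding gg_def by (rule gfun_anti)
    then show "min (gg n y) (gg n X) = gg n X" by (rule min_absorb2)
  qed
  then have "(\<integral>\<^sup>+y. ennreal (min (gg n y) (gg n X)) \<partial>p) = (\<integral>\<^sup>+y. ennreal (gg n X) \<partial>p)"
    by (intro nn_integral_cong_AE) (simp add: AE_measure_pmf_iff)
  also have "\<dots> = ennreal (gg n X)" by (simp add: measure_pmf.emeasure_space_1)
  finally show ?thesis unfolding Good_def by simp
qed

lemma Good_bind:
  assumes "\<forall>x\<in>set_pmf p. Good n X (f x)"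
  shows "Good n X (bind_pmf p f)"
proof -
  have "(\<integral>\<^sup>+x. ennreal (gg n X) \<partial>p) \<le> (\<integral>\<^sup>+x. (\<integral>\<^sup>+y. ennreal (min (gg n y) (gg n X)) \<partial>f x) + ennreal 1 \<partial>p)"
    using assms unfolding Good_def by (intro nn_integral_mono_AE) (simp add: AE_measure_pmf_iff)
  then show ?thesis unfolding Good_def nn_add_const_pmf
    by (simp add: measure_pmf.emeasure_space_1)
qed

lemma card_lits: "card (lits n) = 2 * n"
proof -
  have "card (lits n) = card (Pos ` {1..n}) + card (Neg ` {1..n})"
    unfolding lits_def by (rule card_Un_disjoint) auto
  also have "\<dots> = 2 * n" by (simp add: card_image inj_on_def)
  finally show ?thesis .
qed

lemma finite_lits: "finite (lits n)" by (simp add: lits_def)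

lemma Miss_sub: "Miss n X \<subseteq> lits n" by (auto simp: Miss_def lits_def)

lemma card_Miss: "card (Miss n X) = n - mm n X"
proof -
  have "card (Miss n X) = card ({1..n} - Pset n X)" unfolding Miss_def by (simp add: card_image inj_on_def)
  also have "\<dots> = n - mm n X" unfolding mm_def by (subst card_Diff_subset) (auto simp: Pset_def finite_subset)
  finally show ?thesis .
qed

lemma dd_bound: "n \<ge> 1 \<Longrightarrow> dd n X * real (card (Miss n X)) / real (card (lits n)) \<le> 1"
  using mm_le[of n X] unfolding card_Miss card_lits dd_def by (auto simp: of_nat_diff)

lemma Good_u:
  assumes n: "n \<ge> 1"
    and sup: "\<forall>u\<in>lits n. \<forall>y\<in>set_pmf (k u). set (leaflist y) \<subseteq> set (leaflist X) \<union> {u}"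
  shows "Good n X (bind_pmf (pmf_of_set (lits n)) k)"
proof -
  have ne: "lits n \<noteq> {}" using n by (auto simp: lits_def)
  have pt: "ennreal (gg n X) \<le> (\<integral>\<^sup>+y. ennreal (min (gg n y) (gg n X)) \<partial>k u) + ennreal (dd n X * indicator (Miss n X) u)"
    if u: "u \<in> lits n" for u
  proof -
    have dnn: "0 \<le> dd n X" by (simp add: dd_def)
    have "(\<integral>\<^sup>+y. ennreal (gg n X) \<partial>k u) \<le> (\<integral>\<^sup>+y. ennreal (min (gg n y) (gg n X)) + ennreal (dd n X * indicator (Miss n X) u) \<partial>k u)"
    proof (intro nn_integral_mono_AE, unfold AE_measure_pmf_iff, intro ballI)
      fix y assume "y \<in> set_pmf (k u)"
      have "gg n X \<le> min (gg n y) (gg n X) + dd n X * indicator (Miss n X) u"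
        using sup u key_pointwise `y \<in> set_pmf (k u)` by blast
      moreover have "ennreal (min (gg n y) (gg n X)) + ennreal (dd n X * indicator (Miss n X) u) = ennreal (min (gg n y) (gg n X) + dd n X * indicator (Miss n X) u)"
        using dnn gg_nonneg[of n y] gg_nonneg[of n X] by (intro ennreal_plus[symmetric]) auto
      ultimately show "ennreal (gg n X) \<le> ennreal (min (gg n y) (gg n X)) + ennreal (dd n X * indicator (Miss n X) u)"
        by (simp add: ennreal_leI)
    qed
    then show ?thesis unfolding nn_add_const_pmf by (simp add: measure_pmf.emeasure_space_1)
  qed
  have "ennreal (gg n X) = (\<integral>\<^sup>+u. ennreal (gg n X) \<partial>pmf_of_set (lits n))"
    by (simp add: measure_pmf.emeasure_space_1)
  also have "\<dots> \<le> (\<integral>\<^sup>+u. (\<integral>\<^sup>+y. ennreal (min (gg n y) (gg n X)) \<partial>k u) + ennreal (dd n X * indicator (Miss n X) u) \<partial>pmf_of_set (lits n))"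
    using pt ne finite_lits by (intro nn_integral_mono_AE) (simp add: AE_measure_pmf_iff)
  also have "\<dots> = (\<integral>\<^sup>+u. (\<integral>\<^sup>+y. ennreal (min (gg n y) (gg n X)) \<partial>k u) \<partial>pmf_of_set (lits n)) + (\<integral>\<^sup>+u. ennreal (dd n X * indicator (Miss n X) u) \<partial>pmf_of_set (lits n))"
    by (rule nn_integral_add) auto
  finally have main: "ennreal (gg n X) \<le> (\<integral>\<^sup>+u. (\<integral>\<^sup>+y. ennreal (min (gg n y) (gg n X)) \<partial>k u) \<partial>pmf_of_set (lits n)) + (\<integral>\<^sup>+u. ennreal (dd n X * indicator (Miss n X) u) \<partial>pmf_of_set (lits n))" .
  have le1: "(\<integral>\<^sup>+u. ennreal (dd n X * indicator (Miss n X) u) \<partial>pmf_of_set (lits n)) \<le> 1"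
  proof -
    have "(\<integral>\<^sup>+u. ennreal (dd n X * indicator (Miss n X) u) \<partial>pmf_of_set (lits n)) = ennreal (dd n X) * emeasure (measure_pmf (pmf_of_set (lits n))) (Miss n X)"
      by (subst nn_integral_cmult_indicator[symmetric]) (auto simp: dd_def ennreal_mult' ennreal_indicator intro!: nn_integral_cong)
    also have "\<dots> = ennreal (dd n X) * (real (card (Miss n X)) / real (card (lits n)))"
      using ne finite_lits Miss_sub[of n X]
      by (simp add: emeasure_pmf_of_set Int_absorb1 ennreal_of_nat_eq_real_of_nat divide_ennreal)
    also have "\<dots> = ennreal (dd n X * real (card (Miss n X)) / real (card (lits n)))"
      by (simp add: dd_def ennreal_mult'[symmetric] mult.assoc)
    also have "\<dots> \<le> 1" using dd_bound[OF n] by (simp add: ennreal_leI)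
    finally show ?thesis .
  qed
  show ?thesis unfolding Good_def nn_integral_bind_pmf
    using order.trans[OF main add_left_mono[OF le1]] .
qed


lemma Good_hvl:
  assumes n: "n \<ge> 1"
  shows "Good n X (hvl_prime n X)"
  unfolding hvl_prime_def
proof (intro Good_bind ballI)
  fix op assume "op \<in> set_pmf (pmf_of_set {0, 1, 2::nat})"
  show "Good n X (if op = 0 then substitute n X else if op = 1 then insertion n X else deletion X)"
  proof (cases X)
    case None
    show ?thesis
    proof -
      have "Good n X (substitute n X)" using None by (auto simp: substitute_def intro!: Good_support)
      moreover have "Good n X (insertion n X)" using None unfolding insertion_def
        by (auto intro!: Good_u n simp: leaflist_def)
      moreover have "Good n X (deletion X)" using None by (auto simp: deletion_def intro!: Good_support)
      ultimately show ?thesis by simp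
    qed
  next
    case (Some t)
    have "0 < nleaves t \<and> 0 < nnodes t" by (induction t) auto
    then have ne: "{..<nleaves t} \<noteq> {}" "{..<nnodes t} \<noteq> {}" by auto
    have "Good n X (substitute n X)" unfolding substitute_def Some option.case
      apply (rule Good_bind, rule ballI, rule Good_u[OF n])
      using leaves_subst by (auto simp: leaflist_def)
    moreover have "Good n X (insertion n X)" unfolding insertion_def Some option.case
      apply (rule Good_bind, rule ballI, rule Good_u[OF n])
      using leaves_insert by (auto simp: leaflist_def)
    moreover have "Good n X (deletion X)" using Some ne unfolding deletion_def
      by (auto intro!: Good_bind Good_support dest: leaflist_delete[THEN subsetD])
    ultimately show ?thesis by simp
  qed
qed

lemma drift:
  assumes n: "n \<ge> 1"
  shows "ennreal (gg n X) \<le> (\<integral>\<^sup>+y. ennreal (gg n y) \<partial>gp_step n F X) + 1"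
proof -
  have "ennreal (gg n X) \<le> (\<integral>\<^sup>+y. ennreal (min (gg n y) (gg n X)) \<partial>hvl_prime n X) + 1"
    using Good_hvl[OF n] unfolding Good_def .
  also have "(\<integral>\<^sup>+y. ennreal (min (gg n y) (gg n X)) \<partial>hvl_prime n X) \<le> (\<integral>\<^sup>+y. ennreal (gg n y) \<partial>gp_step n F X)"
    unfolding gp_step_def nn_integral_map_pmf
    by (intro nn_integral_mono) (auto intro!: ennreal_leI)
  finally show ?thesis by (simp add: add_right_mono)
qed


lemma limit_arg:
  fixes p :: "nat \<Rightarrow> real"
  assumes p: "\<And>s. 0 \<le> p s" and a: "0 \<le> a" and c: "0 \<le> c"
    and H: "\<And>t. ennreal a \<le> (\<Sum>s<t. ennreal (p s)) + ennreal c * ennreal (p t)"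
  shows "ennreal a \<le> (\<Sum>s. ennreal (p s))"
proof (cases "(\<Sum>s. ennreal (p s)) = top")
  case True then show ?thesis by simp
next
  case False
  have sm: "summable p" using summable_suminf_not_top[OF p False] .
  have eq: "(\<Sum>s. ennreal (p s)) = ennreal (suminf p)" using suminf_ennreal[OF p False] .
  have "\<forall>t. a \<le> suminf p + c * p t"
  proof
    fix t
    have "ennreal a \<le> ennreal (sum p {..<t} + c * p t)"
      using H[of t] p c by (simp add: sum_ennreal ennreal_mult'[symmetric] ennreal_plus[symmetric] sum_nonneg del: ennreal_plus)
    then have "a \<le> sum p {..<t} + c * p t" using p c by (subst (asm) ennreal_le_iff) (auto intro!: add_nonneg_nonneg sum_nonneg mult_nonneg_nonneg)
    moreover have "sum p {..<t} \<le> suminf p" using sm p by (intro sum_le_suminf) auto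
    ultimately show "a \<le> suminf p + c * p t" by linarith
  qed
  moreover have "(\<lambda>t. suminf p + c * p t) \<longlonglongrightarrow> suminf p + c * 0"
    by (intro tendsto_intros summable_LIMSEQ_zero sm)
  ultimately have "a \<le> suminf p" by (intro LIMSEQ_le_const[where X="\<lambda>t. suminf p + c * p t"]) auto
  then show ?thesis unfolding eq by (simp add: ennreal_leI)
qed

lemma traj_claim:
  fixes K :: "'a \<Rightarrow> 'a pmf" and G :: "'a \<Rightarrow> real"
  assumes Gnn: "\<And>x. 0 \<le> G x" and Gopt: "\<And>x. Opt x \<Longrightarrow> G x = 0"
    and drift: "\<And>x. ennreal (G x) \<le> (\<integral>\<^sup>+y. ennreal (G y) \<partial>K x) + 1"
  defines "E \<equiv> {xs. \<forall>x\<in>set xs. \<not> Opt x}"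
  shows "ennreal (G x0) \<le> (\<Sum>s<t. ennreal (measure_pmf.prob (traj K x0 s) E))
           + (\<integral>\<^sup>+xs. indicator E xs * ennreal (G (last xs)) \<partial>traj K x0 t)"
proof (induction t)
  case 0
  show ?case using Gopt by (cases "Opt x0") (auto simp: E_def)
next
  case (Suc t)
  let ?I = "\<lambda>xs. indicator E xs :: ennreal"
  have split: "?I (xs @ [y]) * ennreal (G y) = ?I xs * ennreal (G y)" for xs y
    using Gopt by (cases "Opt y") (auto simp: E_def indicator_def)
  have "(\<integral>\<^sup>+xs. ?I xs * ennreal (G (last xs)) \<partial>traj K x0 (Suc t))
      = (\<integral>\<^sup>+xs. \<integral>\<^sup>+y. ?I (xs @ [y]) * ennreal (G y) \<partial>K (last xs) \<partial>traj K x0 t)"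
    by simp
  also have "\<dots> = (\<integral>\<^sup>+xs. ?I xs * (\<integral>\<^sup>+y. ennreal (G y) \<partial>K (last xs)) \<partial>traj K x0 t)"
    unfolding split by (simp add: nn_integral_cmult)
  finally have nx: "(\<integral>\<^sup>+xs. ?I xs * ennreal (G (last xs)) \<partial>traj K x0 (Suc t))
      = (\<integral>\<^sup>+xs. ?I xs * (\<integral>\<^sup>+y. ennreal (G y) \<partial>K (last xs)) \<partial>traj K x0 t)" .
  have "(\<integral>\<^sup>+xs. ?I xs * ennreal (G (last xs)) \<partial>traj K x0 t)
      \<le> (\<integral>\<^sup>+xs. ?I xs * (\<integral>\<^sup>+y. ennreal (G y) \<partial>K (last xs)) + ?I xs \<partial>traj K x0 t)"
  proof (intro nn_integral_mono)
    fix xs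
    have "?I xs * ennreal (G (last xs)) \<le> ?I xs * ((\<integral>\<^sup>+y. ennreal (G y) \<partial>K (last xs)) + 1)"
      by (intro mult_left_mono drift) auto
    then show "?I xs * ennreal (G (last xs)) \<le> ?I xs * (\<integral>\<^sup>+y. ennreal (G y) \<partial>K (last xs)) + ?I xs"
      by (simp add: distrib_left)
  qed
  also have "\<dots> = (\<integral>\<^sup>+xs. ?I xs * (\<integral>\<^sup>+y. ennreal (G y) \<partial>K (last xs)) \<partial>traj K x0 t) + (\<integral>\<^sup>+xs. ?I xs \<partial>traj K x0 t)"
    by (rule nn_integral_add) auto
  also have "(\<integral>\<^sup>+xs. ?I xs \<partial>traj K x0 t) = ennreal (measure_pmf.prob (traj K x0 t) E)"
    by (simp add: measure_pmf.emeasure_eq_measure)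
  finally have st: "(\<integral>\<^sup>+xs. ?I xs * ennreal (G (last xs)) \<partial>traj K x0 t)
     \<le> (\<integral>\<^sup>+xs. ?I xs * ennreal (G (last xs)) \<partial>traj K x0 (Suc t)) + ennreal (measure_pmf.prob (traj K x0 t) E)"
    unfolding nx .
  show ?case
    using order.trans[OF Suc add_left_mono[OF st]] by (simp add: add_ac)
qed

lemma traj_final:
  fixes K :: "'a \<Rightarrow> 'a pmf" and G :: "'a \<Rightarrow> real"
  assumes Gnn: "\<And>x. 0 \<le> G x" and Gopt: "\<And>x. Opt x \<Longrightarrow> G x = 0"
    and Gmax: "\<And>x. G x \<le> M"
    and drift: "\<And>x. ennreal (G x) \<le> (\<integral>\<^sup>+y. ennreal (G y) \<partial>K x) + 1"
  shows "ennreal (G x0) \<le> (\<Sum>t. ennreal (measure_pmf.prob (traj K x0 t) {xs. \<forall>x\<in>set xs. \<not> Opt x}))"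
proof (rule limit_arg[where c = M])
  let ?E = "{xs. \<forall>x\<in>set xs. \<not> Opt x}"
  fix t
  have "(\<integral>\<^sup>+xs. indicator ?E xs * ennreal (G (last xs)) \<partial>traj K x0 t) \<le> (\<integral>\<^sup>+xs. ennreal M * indicator ?E xs \<partial>traj K x0 t)"
    using Gmax by (intro nn_integral_mono) (auto simp: indicator_def intro!: ennreal_leI)
  also have "\<dots> = ennreal M * ennreal (measure_pmf.prob (traj K x0 t) ?E)"
    by (simp add: nn_integral_cmult measure_pmf.emeasure_eq_measure)
  finally show "ennreal (G x0) \<le> (\<Sum>s<t. ennreal (measure_pmf.prob (traj K x0 s) ?E)) + ennreal M * ennreal (measure_pmf.prob (traj K x0 t) ?E)"
    using order.trans[OF traj_claim[of G Opt K x0 t, OF Gnn Gopt drift] add_left_mono] by blast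
qed (auto intro: order.trans[OF Gnn Gmax] Gnn)


fun mk :: "lit \<Rightarrow> lit list \<Rightarrow> tree" where
  "mk a [] = Lf a"
| "mk a (b # l) = J (Lf a) (mk b l)"

lemma leaves_mk: "leaves (mk a l) = a # l"
  by (induction a l rule: mk.induct) auto

definition Ywit :: "nat \<Rightarrow> tree option" where
  "Ywit n = Some (mk (Pos 1) (map Pos [2..<n+1]))"

lemma leaflist_Ywit: "n \<ge> 1 \<Longrightarrow> leaflist (Ywit n) = map Pos [1..<n+1]"
proof -
  assume n: "n \<ge> 1"
  have "[1..<n+1] = 1 # [2..<n+1]" using n by (simp add: upt_conv_Cons numeral_2_eq_2 del: upt_Suc)
  then show ?thesis unfolding Ywit_def leaflist_def using leaves_mk by (simp del: upt_Suc)
qed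

lemma valid_Ywit: "n \<ge> 1 \<Longrightarrow> valid_tree n (Ywit n)"
  unfolding valid_tree_def leaflist_Ywit by (auto simp: lits_def)

lemma os1: "set S \<subseteq> set (order_scan S l)"
  by (induction S l rule: order_scan.induct) auto

lemma os2: "a \<in> set l \<Longrightarrow> a \<in> set (order_scan S l) \<or> compl a \<in> set (order_scan S l)"
proof (induction S l rule: order_scan.induct)
  case (2 S b l)
  show ?case
  proof (cases "a = b")
    case True
    then show ?thesis using os1[of "if b \<in> set S \<or> compl b \<in> set S then S else S @ [b]" l] by (auto split: if_splits)
  next
    case False
    then show ?thesis using 2 by auto
  qed
qed simp

lemma os3: "set (order_scan S l) \<subseteq> set S \<union> set l"
  by (induction S l rule: order_scan.induct) auto

lemma sum_if_card: "finite A \<Longrightarrow> (\<Sum>i\<in>A. if P i then (1::real) else 0) = real (card {i\<in>A. P i})"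
  by (simp add: sum.If_cases Int_def conj_commute)

lemma ORDER_le: "ORDER n X \<le> real (mm n X)"
proof -
  have "ORDER n X \<le> (\<Sum>i\<in>{1..n}. if Pos i \<in> set (leaflist X) then (1::real) else 0)"
    unfolding ORDER_def worder_def using os3[of "[]" "leaflist X"]
    by (intro sum_mono) auto
  also have "\<dots> = real (mm n X)" by (simp add: sum_if_card mm_def Pset_def)
  finally show ?thesis .
qed

lemma MAJ_le: "MAJORITY n X \<le> real (mm n X)"
proof -
  have "MAJORITY n X \<le> (\<Sum>i\<in>{1..n}. if Pos i \<in> set (leaflist X) then (1::real) else 0)"
    unfolding MAJORITY_def wmajority_def
    by (intro sum_mono) (auto simp: count_list_0_iff[symmetric])
  also have "\<dots> = real (mm n X)" by (simp add: sum_if_card mm_def Pset_def)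
  finally show ?thesis .
qed

lemma ORDER_Y: "n \<ge> 1 \<Longrightarrow> ORDER n (Ywit n) = real n"
proof -
  assume n: "n \<ge> 1"
  have "\<forall>i\<in>{1..n}. Pos i \<in> set (order_scan [] (leaflist (Ywit n)))"
  proof
    fix i assume i: "i \<in> {1..n}"
    have "Pos i \<in> set (leaflist (Ywit n))" using i n by (auto simp: leaflist_Ywit)
    from os2[OF this, of "[]"] os3[of "[]" "leaflist (Ywit n)"] n
    show "Pos i \<in> set (order_scan [] (leaflist (Ywit n)))" by (auto simp: leaflist_Ywit)
  qed
  then show ?thesis unfolding ORDER_def worder_def by simp
qed

lemma MAJ_Y: "n \<ge> 1 \<Longrightarrow> MAJORITY n (Ywit n) = real n"
proof -
  assume n: "n \<ge> 1"
  have "\<forall>i\<in>{1..n}. count_list (leaflist (Ywit n)) (Pos i) \<ge> 1 \<and>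
        count_list (leaflist (Ywit n)) (Pos i) \<ge> count_list (leaflist (Ywit n)) (Neg i)"
  proof
    fix i assume i: "i \<in> {1..n}"
    have "Pos i \<in> set (leaflist (Ywit n))" using i n by (auto simp: leaflist_Ywit)
    moreover have "Neg i \<notin> set (leaflist (Ywit n))" using n by (auto simp: leaflist_Ywit)
    ultimately show "count_list (leaflist (Ywit n)) (Pos i) \<ge> 1 \<and>
        count_list (leaflist (Ywit n)) (Pos i) \<ge> count_list (leaflist (Ywit n)) (Neg i)"
      by (metis count_list_0_iff less_one not_le zero_le)
  qed
  then show ?thesis unfolding MAJORITY_def wmajority_def by simp
qed

lemma opt_mm:
  assumes n: "n \<ge> 1" and le: "\<And>X. F X \<le> real (mm n X)" and Y: "F (Ywit n) = real n"
    and opt: "optimal n F X"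
  shows "gg n X = 0"
proof -
  have "real n \<le> F X" using opt valid_Ywit[OF n] Y unfolding optimal_def by metis
  then have "mm n X = n" using le[of X] mm_le[of n X] by linarith
  then show ?thesis by (simp add: gg_def gfun_def harm_altdef)
qed

lemma gg_max: "gg n X \<le> gg n None"
  unfolding gg_def by (rule gfun_anti) (simp add: mm_def Pset_def leaflist_def)

lemma gg_None: "gg n None = 2 * real n * harm n"
  by (simp add: gg_def gfun_def mm_def Pset_def leaflist_def)

lemma main_bound:
  assumes n: "n \<ge> 1" and le: "\<And>X. F X \<le> real (mm n X)" and Y: "F (Ywit n) = real n"
  shows "ennreal (real n * ln (real n)) \<le> expected_opt_time n F None"
proof -
  have "ennreal (gg n None) \<le> expected_opt_time n F None"
    unfolding expected_opt_time_def
    by (rule traj_final[where M = "gg n None"])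
       (auto intro: gg_nonneg opt_mm[OF n le Y] gg_max drift[OF n])
  moreover have "real n * ln (real n) \<le> gg n None"
  proof -
    have "ln (real n) \<le> ln (real n + 1)" using n by simp
    also have "\<dots> \<le> harm n" by (rule ln_le_harm)
    finally have "ln (real n) \<le> harm n" .
    moreover have "0 \<le> (harm n :: real)" by (simp add: harm_nonneg)
    ultimately have "real n * ln (real n) \<le> real n * (2 * harm n)"
      by (intro mult_left_mono) auto
    then show ?thesis by (simp add: gg_None)
  qed
  ultimately show ?thesis by (meson ennreal_leI order.trans)
qed

theorem theorem1:
  shows "\<exists>c>0. \<exists>N. \<forall>n\<ge>N.
           ennreal (c * real n * ln (real n)) \<le> expected_opt_time n (ORDER n) None \<and>
           ennreal (c * real n * ln (real n)) \<le> expected_opt_time n (MAJORITY n) None"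
proof (intro exI[of _ 1] conjI exI[of _ 1] allI impI)
  fix n :: nat assume n: "1 \<le> n"
  show "ennreal (1 * real n * ln (real n)) \<le> expected_opt_time n (ORDER n) None"
    using main_bound[OF n ORDER_le ORDER_Y[OF n]] by simp
  show "ennreal (1 * real n * ln (real n)) \<le> expected_opt_time n (MAJORITY n) None"
    using main_bound[OF n MAJ_le MAJ_Y[OF n]] by simp
qed simp

end
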